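(* Let $X$ be a real Banach space, $I=\{1,\ldots,m\}$, $J=\{1,\ldots,l\}$, $f_i,g_j\colon X\to\mathbb{R}$, $M=\{x\in X\mid f_i(x)=0\ \forall i\in I,\ g_j(x)\le0\ \forall j\in J\}$, $\overline{x}\in M$, and $J(\overline{x})=\{j\in J\mid g_j(\overline{x})=0\}$. Let the functions $f_i$, $i\in I$, and $g_j$, $j\in J(\overline{x})$, be quasidifferentiable at $\overline{x}$ with given quasidifferentials, and let $x_i^*\in\underline{\partial} f_i(\overline{x})$, $y_i^*\in\overline{\partial} f_i(\overline{x})$, $i\in I$, and $z_j^*\in\overline{\partial} g_j(\overline{x})$, $j\in J(\overline{x})$, be given. Put $C_i=(\underline{\partial} f_i(\overline{x})+y_i^* )\cup(-x_i^*-\overline{\partial} f_i(\overline{x}))$, $i\in I$. Then the following three conditions (1) for any $i\in I$ there exists $v_i\in X$ such that $s(\underline{\partial} f_i(\overline{x})+y_i^*,v_i)<0$ and for any $k\ne i$, $s(\underline{\partial} f_k(\overline{x})+y_k^*,v_i)\le 0$ and $s(-x_k^*-\overline{\partial} f_k(\overline{x}),v_i)\le0$; (2) for any $i\in I$ there exists $w_i\in X$ such that $s(-x_i^*-\overline{\partial} f_i(\overline{x}),w_i)<0$ and for any $k\ne i$, $s(-x_k^*-\overline{\partial} f_k(\overline{x}),w_i)\le0$ and $s(\underline{\partial} f_k(\overline{x})+y_k^*,w_i)\le0$; (3) there exists $v_0\in X$ with $s(\underline{\partial} g_j(\overline{x})+z_j^*,v_0)<0$ for all $j\in J(\overline{x})$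 and $s(\underline{\partial} f_i(\overline{x})+y_i^*,v_0)\le0$, $s(-x_i^*-\overline{\partial} f_i(\overline{x}),v_0)\le0$ for all $i\in I$; are all satisfied if and only if $$C_i\cap\operatorname{cl}^*\operatorname{cone}\{-C_k\mid k\ne i\}=\emptyset\quad\forall i\in I$$ and $$\operatorname{co}\{\underline{\partial} g_j(\overline{x})+z_j^*\mid j\in J(\overline{x})\}\cap\operatorname{cl}^*\operatorname{cone}\{-C_i\mid i\in I\}=\emptyset.$$
   Context: $X^*$ is the dual of $X$ with pairing $\langle\cdot,\cdot\rangle$; $\operatorname{cl}^*$ is closure in the weak$^*$ topology. A function $f$ is quasidifferentiable at $x$ if the directional derivative $f'(x,v)=\lim_{\alpha\to+0}(f(x+\alpha v)-f(x))/\alpha$ exists and is finite for all $v$ and there is a pair $[\underline{\partial} f(x),\overline{\partial} f(x)]$ of convex weak$^*$ compact subsets of $X^*$ with $f'(x,v)=\max_{x^*\in\underline{\partial} f(x)}\langle x^*,v\rangle+\min_{y^*\in\overline{\partial} f(x)}\langle y^*,v\rangle$ for all $v$; a specific such pair is fixed for each function. $s(C,v)=\sup_{x^*\in C}\langle x^*,v\rangle$. For $A$ a subset of a real vector space, $\operatorname{cone}A$ is the set of all finite combinations $\sum\lambda_ix_i$ with $x_i\in A$, $\lambda_i\ge0$; for a family of sets, $\operatorname{cone}\{A_k\}$ means the cone of their union; $\operatorname{co}$ denotes convex hull (of the union of the listed sets). *)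

theory Defs
  imports "HOL-Analysis.Analysis"
begin

text \<open>The dual space X* is represented as the set of bounded linear functionals
  'a => real; the pairing <x*, v> is application x* v.  The weak* topology on X*
  is the subspace topology induced by the product (pointwise convergence)
  topology on the function type 'a => real.\<close>

definition dual_space :: "('a::real_normed_vector \<Rightarrow> real) set" where
  "dual_space = {\<phi>. bounded_linear \<phi>}"

definition wstar_closure :: "('a::real_normed_vector \<Rightarrow> real) set \<Rightarrow> ('a \<Rightarrow> real) set" where
  "wstar_closure S = closure S \<inter> dual_space"

definition wstar_convex_compact :: "('a::real_normed_vector \<Rightarrow> real) set \<Rightarrow> bool" where
  "wstar_convex_compact K \<longleftrightarrow> K \<subseteq> dual_space \<and> compact K \<and>
     (\<forall>\<phi>\<in>K. \<forall>\<psi>\<in>K. \<forall>t::real. 0 \<le> t \<and> t \<le> 1 \<longrightarrow> (\<lambda>v. t * \<phi> v + (1 - t) * \<psi> v) \<in> K)"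

definition support_fun :: "('a \<Rightarrow> real) set \<Rightarrow> 'a \<Rightarrow> real" where
  "support_fun C v = (SUP \<phi>\<in>C. \<phi> v)"

text \<open>f is quasidifferentiable at x with quasidifferential [Dl, Du]:
  the directional derivative f'(x,v) exists, is finite, and equals
  max over Dl + min over Du (written Sup/Inf: the sets are nonempty and
  weak* compact, so these are attained).\<close>
definition quasidifferentiable_with ::
  "('a::real_normed_vector \<Rightarrow> real) \<Rightarrow> 'a \<Rightarrow> ('a \<Rightarrow> real) set \<Rightarrow> ('a \<Rightarrow> real) set \<Rightarrow> bool" where
  "quasidifferentiable_with f x Dl Du \<longleftrightarrow>
     wstar_convex_compact Dl \<and> wstar_convex_compact Du \<and> Dl \<noteq> {} \<and> Du \<noteq> {} \<and>
     (\<forall>v. ((\<lambda>\<alpha>. (f (x + \<alpha> *\<^sub>R v) - f x) / \<alpha>) \<longlongrightarrow>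
            ((SUP \<phi>\<in>Dl. \<phi> v) + (INF \<psi>\<in>Du. \<psi> v))) (at_right 0))"

definition shift_set :: "('a \<Rightarrow> real) set \<Rightarrow> ('a \<Rightarrow> real) \<Rightarrow> ('a \<Rightarrow> real) set" where
  "shift_set D y = (\<lambda>\<phi> v. \<phi> v + y v) ` D"

definition neg_shift_set :: "('a \<Rightarrow> real) \<Rightarrow> ('a \<Rightarrow> real) set \<Rightarrow> ('a \<Rightarrow> real) set" where
  "neg_shift_set x D = (\<lambda>\<psi> v. - x v - \<psi> v) ` D"

definition neg_set :: "('a \<Rightarrow> real) set \<Rightarrow> ('a \<Rightarrow> real) set" where
  "neg_set C = (\<lambda>\<phi> v. - \<phi> v) ` C"

definition cone_gen :: "('a \<Rightarrow> real) set \<Rightarrow> ('a \<Rightarrow> real) set" where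
  "cone_gen A = {\<phi>. \<exists>F c. finite F \<and> F \<subseteq> A \<and> (\<forall>\<psi>\<in>F. 0 \<le> c \<psi>) \<and>
                        \<phi> = (\<lambda>v. \<Sum>\<psi>\<in>F. c \<psi> * \<psi> v)}"

definition co_gen :: "('a \<Rightarrow> real) set \<Rightarrow> ('a \<Rightarrow> real) set" where
  "co_gen A = {\<phi>. \<exists>F c. finite F \<and> F \<subseteq> A \<and> F \<noteq> {} \<and> (\<forall>\<psi>\<in>F. 0 \<le> c \<psi>) \<and>
                      sum c F = 1 \<and> \<phi> = (\<lambda>v. \<Sum>\<psi>\<in>F. c \<psi> * \<psi> v)}"

end

theory Submission
  imports Defs
begin



lemma basic_nbhd:
  fixes U :: "('a \<Rightarrow> real) set"
  assumes "open U" "a \<in> U"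
  shows "\<exists>F e. finite F \<and> e > 0 \<and> {\<phi>. \<forall>x\<in>F. \<bar>\<phi> x - a x\<bar> < e} \<subseteq> U"
proof -
  have "openin (product_topology (\<lambda>i. euclidean) UNIV) U"
    using assms unfolding open_fun_def by auto
  from product_topology_open_contains_basis[OF this assms(2)]
  obtain X where X: "a \<in> (\<Pi>\<^sub>E i\<in>UNIV. X i)" "\<And>i. open (X i)" "finite {i. X i \<noteq> UNIV}"
     "(\<Pi>\<^sub>E i\<in>UNIV. X i) \<subseteq> U" by auto
  define I where "I = {i. X i \<noteq> UNIV}"
  have "\<forall>i\<in>I. \<exists>e>0. ball (a i) e \<subseteq> X i"
    using X(1,2) by (meson PiE_E UNIV_I openE)
  then obtain ei where ei: "\<And>i. i \<in> I \<Longrightarrow> ei i > 0 \<and> ball (a i) (ei i) \<subseteq> X i"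
    by metis
  define e where "e = Min (insert 1 (ei ` I))"
  have fI: "finite I" using X(3) I_def by simp
  have epos: "e > 0" unfolding e_def using fI ei by auto
  have ele: "e \<le> ei i" if "i \<in> I" for i unfolding e_def using fI that by auto
  have "{\<phi>. \<forall>x\<in>I. \<bar>\<phi> x - a x\<bar> < e} \<subseteq> U"
  proof
    fix \<phi> assume h: "\<phi> \<in> {\<phi>. \<forall>x\<in>I. \<bar>\<phi> x - a x\<bar> < e}"
    have "\<phi> i \<in> X i" for i
    proof (cases "i \<in> I")
      case True
      then have "\<bar>\<phi> i - a i\<bar> < ei i" using h ele[OF True] by auto
      then have "\<phi> i \<in> ball (a i) (ei i)" by (simp add: dist_real_def abs_minus_commute)
      then show ?thesis using ei[OF True] by blast
    next
      case False then show ?thesis by (auto simp: I_def)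
    qed
    then have "\<phi> \<in> (\<Pi>\<^sub>E i\<in>UNIV. X i)" by auto
    then show "\<phi> \<in> U" using X(4) by auto
  qed
  then show ?thesis using fI epos by blast
qed

lemma open_box_fun:
  fixes a :: "'a \<Rightarrow> real"
  assumes "finite F"
  shows "open {\<phi>. \<forall>x\<in>F. \<bar>\<phi> x - a x\<bar> < r}"
proof -
  have "open {f. \<forall>i\<in>F. f (id i) \<in> {y. \<bar>y - a i\<bar> < r}}"
    by (rule product_topology_basis') (auto intro!: open_Collect_less continuous_intros simp: assms)
  then show ?thesis by simp
qed

lemma finite_sep:
  fixes A K :: "('a \<Rightarrow> real) set"
  assumes cA: "compact A" and cK: "closed K" and disj: "A \<inter> K = {}" and ne: "A \<noteq> {}"
  shows "\<exists>F \<epsilon>. finite F \<and> \<epsilon> > 0 \<and> (\<forall>a\<in>A. \<forall>k\<in>K. \<exists>x\<in>F. \<epsilon> \<le> \<bar>a x - k x\<bar>)"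
proof -
  have "\<forall>a\<in>A. \<exists>F e. finite F \<and> e > 0 \<and> {\<phi>. \<forall>x\<in>F. \<bar>\<phi> x - a x\<bar> < e} \<subseteq> - K"
  proof
    fix a assume "a \<in> A"
    then have "a \<in> - K" using disj by auto
    moreover have "open (- K)" using cK by (simp add: open_Compl)
    ultimately show "\<exists>F e. finite F \<and> e > 0 \<and> {\<phi>. \<forall>x\<in>F. \<bar>\<phi> x - a x\<bar> < e} \<subseteq> - K"
      using basic_nbhd by blast
  qed
  from bchoice[OF this] obtain Fa where H1: "\<forall>a\<in>A. \<exists>e. finite (Fa a) \<and> e > 0 \<and> {\<phi>. \<forall>x\<in>Fa a. \<bar>\<phi> x - a x\<bar> < e} \<subseteq> - K"
    by blast
  from bchoice[OF H1] obtain ea where H2: "\<forall>a\<in>A. finite (Fa a) \<and> ea a > 0 \<and> {\<phi>. \<forall>x\<in>Fa a. \<bar>\<phi> x - a x\<bar> < ea a} \<subseteq> - K"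
    by blast
  have Fa: "\<And>a. a \<in> A \<Longrightarrow> finite (Fa a) \<and> ea a > 0 \<and> {\<phi>. \<forall>x\<in>Fa a. \<bar>\<phi> x - a x\<bar> < ea a} \<subseteq> - K"
    using H2 by blast
  define W where "W = (\<lambda>a. {\<phi>. \<forall>x\<in>Fa a. \<bar>\<phi> x - a x\<bar> < ea a / 2})"
  have opW: "\<And>a. a \<in> A \<Longrightarrow> open (W a)" unfolding W_def
  proof -
    fix a assume "a \<in> A"
    then have "finite (Fa a)" using Fa by blast
    then show "open {\<phi>. \<forall>x\<in>Fa a. \<bar>\<phi> x - a x\<bar> < ea a / 2}" by (rule open_box_fun)
  qed
  have covA: "A \<subseteq> (\<Union>a\<in>A. W a)"
  proof
    fix a assume a: "a \<in> A"
    have "a \<in> W a" unfolding W_def using Fa[OF a] by simp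
    then show "a \<in> (\<Union>a\<in>A. W a)" using a by blast
  qed
  obtain T where T: "T \<subseteq> A" "finite T" "A \<subseteq> (\<Union>a\<in>T. W a)"
    by (rule compactE_image[OF cA opW covA])
  have Tne: "T \<noteq> {}" using T ne by auto
  define F where "F = (\<Union>a\<in>T. Fa a)"
  define \<epsilon> where "\<epsilon> = Min ((\<lambda>a. ea a / 2) ` T)"
  have fF: "finite F" unfolding F_def
  proof (rule finite_UN_I[OF T(2)])
    fix a assume "a \<in> T" then show "finite (Fa a)" using T(1) Fa by blast
  qed
  have epos: "\<epsilon> > 0" unfolding \<epsilon>_def
  proof (subst Min_gr_iff)
    show "finite ((\<lambda>a. ea a / 2) ` T)" using T(2) by simp
    show "(\<lambda>a. ea a / 2) ` T \<noteq> {}" using Tne by simp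
    show "\<forall>a\<in>(\<lambda>a. ea a / 2) ` T. 0 < a" using T(1) Fa by fastforce
  qed
  have ele: "\<epsilon> \<le> ea a / 2" if "a \<in> T" for a unfolding \<epsilon>_def
    by (rule Min_le) (use T(2) that in auto)
  have "\<exists>x\<in>F. \<epsilon> \<le> \<bar>b x - k x\<bar>" if b: "b \<in> A" and k: "k \<in> K" for b k
  proof -
    obtain a where a: "a \<in> T" "b \<in> W a" using T b by auto
    have "a \<in> A" using a T by blast
    then have "k \<notin> {\<phi>. \<forall>x\<in>Fa a. \<bar>\<phi> x - a x\<bar> < ea a}" using Fa[of a] k by blast
    then obtain x where x: "x \<in> Fa a" "ea a \<le> \<bar>k x - a x\<bar>" by auto
    have "\<bar>b x - a x\<bar> < ea a / 2" using a x unfolding W_def by auto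
    then have "\<epsilon> \<le> \<bar>b x - k x\<bar>" using x ele[OF a(1)] by linarith
    moreover have "x \<in> F" using x a unfolding F_def by auto
    ultimately show ?thesis by auto
  qed
  then show ?thesis using fF epos by blast
qed


lemma cone_0: "(\<lambda>v. 0) \<in> cone_gen G"
  unfolding cone_gen_def by (auto intro!: exI[of _ "{}"])

lemma cone_single: "\<psi> \<in> G \<Longrightarrow> 0 \<le> t \<Longrightarrow> (\<lambda>v. t * \<psi> v) \<in> cone_gen G"
  unfolding cone_gen_def by (auto intro!: exI[of _ "{\<psi>}"] exI[of _ "\<lambda>_. t"])

lemma cone_comb:
  assumes "\<phi>1 \<in> cone_gen G" "\<phi>2 \<in> cone_gen G" "0 \<le> s" "0 \<le> t"
  shows "(\<lambda>v. s * \<phi>1 v + t * \<phi>2 v) \<in> cone_gen G"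
proof -
  obtain F1 c1 where 1: "finite F1" "F1 \<subseteq> G" "\<forall>\<psi>\<in>F1. 0 \<le> c1 \<psi>" "\<phi>1 = (\<lambda>v. \<Sum>\<psi>\<in>F1. c1 \<psi> * \<psi> v)"
    using assms(1) unfolding cone_gen_def by blast
  obtain F2 c2 where 2: "finite F2" "F2 \<subseteq> G" "\<forall>\<psi>\<in>F2. 0 \<le> c2 \<psi>" "\<phi>2 = (\<lambda>v. \<Sum>\<psi>\<in>F2. c2 \<psi> * \<psi> v)"
    using assms(2) unfolding cone_gen_def by blast
  define c where "c = (\<lambda>\<psi>. s * (if \<psi> \<in> F1 then c1 \<psi> else 0) + t * (if \<psi> \<in> F2 then c2 \<psi> else 0))"
  have fU: "finite (F1 \<union> F2)" using 1 2 by simp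
  have e1: "(\<Sum>\<psi>\<in>F1 \<union> F2. (if \<psi> \<in> F1 then c1 \<psi> * \<psi> v else 0)) = (\<Sum>\<psi>\<in>F1. c1 \<psi> * \<psi> v)" for v
    using sum.inter_restrict[OF fU, of "\<lambda>\<psi>. c1 \<psi> * \<psi> v" F1] by (simp add: Int_absorb1)
  have e2: "(\<Sum>\<psi>\<in>F1 \<union> F2. (if \<psi> \<in> F2 then c2 \<psi> * \<psi> v else 0)) = (\<Sum>\<psi>\<in>F2. c2 \<psi> * \<psi> v)" for v
    using sum.inter_restrict[OF fU, of "\<lambda>\<psi>. c2 \<psi> * \<psi> v" F2] by (simp add: Int_absorb1)
  have "(\<Sum>\<psi>\<in>F1 \<union> F2. c \<psi> * \<psi> v) = s * \<phi>1 v + t * \<phi>2 v" for v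
  proof -
    have "(\<Sum>\<psi>\<in>F1 \<union> F2. c \<psi> * \<psi> v) = (\<Sum>\<psi>\<in>F1 \<union> F2. s * (if \<psi> \<in> F1 then c1 \<psi> * \<psi> v else 0) + t * (if \<psi> \<in> F2 then c2 \<psi> * \<psi> v else 0))"
      by (rule sum.cong) (auto simp: c_def algebra_simps)
    also have "\<dots> = s * (\<Sum>\<psi>\<in>F1 \<union> F2. (if \<psi> \<in> F1 then c1 \<psi> * \<psi> v else 0)) + t * (\<Sum>\<psi>\<in>F1 \<union> F2. (if \<psi> \<in> F2 then c2 \<psi> * \<psi> v else 0))"
      by (simp add: sum.distrib sum_distrib_left)
    also have "\<dots> = s * \<phi>1 v + t * \<phi>2 v" using e1 e2 1(4) 2(4) by simp
    finally show ?thesis .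
  qed
  moreover have "\<forall>\<psi>\<in>F1 \<union> F2. 0 \<le> c \<psi>" using 1(3) 2(3) assms(3,4) by (auto simp: c_def)
  ultimately show ?thesis unfolding cone_gen_def using fU 1(2) 2(2)
    by (auto intro!: exI[of _ "F1 \<union> F2"] exI[of _ c])
qed

lemma quad_aux:
  fixes d N :: real
  assumes h: "\<forall>l::real. 0 < l \<and> l \<le> 1 \<longrightarrow> 0 \<le> 2*l*d + l^2*N" and N: "0 \<le> N"
  shows "0 \<le> d"
proof (rule ccontr)
  assume "\<not> 0 \<le> d"
  then have d: "d < 0" by simp
  define l where "l = min 1 (-d/(N+1))"
  have "d / (N + 1) < 0" using d N by (simp add: divide_neg_pos)
  then have l0: "0 < l" "l \<le> 1" using d N by (auto simp: l_def)
  have "l \<le> -d/(N+1)" by (simp add: l_def)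
  moreover have "-d/(N+1) * (N+1) = -d" using N by simp
  ultimately have "l * (N+1) \<le> -d" using N by (metis mult_right_mono add_nonneg_pos zero_less_one less_imp_le)
  then have lN: "l * N \<le> -d" using l0 by (simp add: algebra_simps)
  have "2*l*d + l^2*N = l * (2*d + l*N)" by (simp add: power2_eq_square algebra_simps)
  also have "\<dots> \<le> l * d" using lN l0 by (simp add: mult_left_mono)
  also have "\<dots> < 0" using l0 d by (simp add: mult_pos_neg)
  finally show False using h l0 by fastforce
qed

lemma compact_box:
  fixes F :: "'a set" and R :: real
  shows "compact (PiE UNIV (\<lambda>x. if x \<in> F then {-R..R} else {0::real}))"
proof -
  have "compactin (product_topology (\<lambda>i. euclidean) UNIV) (PiE UNIV (\<lambda>x. if x \<in> F then {-R..R} else {0::real}))"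
    by (subst compactin_PiE) auto
  then show ?thesis by (simp add: euclidean_product_topology)
qed


lemma cont_eval: "continuous_on S (\<lambda>p::'a \<Rightarrow> real. p x)"
  by (rule continuous_on_subset[OF continuous_on_product_coordinates]) simp

lemma sep:
  fixes A G :: "('a::real_normed_vector \<Rightarrow> real) set"
  assumes cA: "compact A"
    and cvA: "\<forall>\<phi>\<in>A. \<forall>\<psi>\<in>A. \<forall>t::real. 0 \<le> t \<and> t \<le> 1 \<longrightarrow> (\<lambda>v. t * \<phi> v + (1 - t) * \<psi> v) \<in> A"
    and lA: "\<forall>\<phi>\<in>A. linear \<phi>" and lG: "\<forall>\<psi>\<in>G. linear \<psi>"
    and disj: "A \<inter> closure (cone_gen G) = {}"
  shows "\<exists>v. (\<forall>\<phi>\<in>A. \<phi> v < 0) \<and> (\<forall>\<psi>\<in>G. 0 \<le> \<psi> v)"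
proof (cases "A = {}")
  case True
  have "\<forall>\<psi>\<in>G. \<psi> 0 = 0" using lG linear_0 by blast
  then show ?thesis using True by (intro exI[of _ 0]) auto
next
  case False
  define K0 where "K0 = cone_gen G"
  have "\<exists>F \<epsilon>. finite F \<and> \<epsilon> > 0 \<and> (\<forall>a\<in>A. \<forall>k\<in>closure K0. \<exists>x\<in>F. \<epsilon> \<le> \<bar>a x - k x\<bar>)"
    by (rule finite_sep[OF cA closed_closure _ False]) (use disj K0_def in simp)
  then obtain F \<epsilon> where F: "finite F" and epos: "\<epsilon> > 0"
    and Fsep: "\<forall>a\<in>A. \<forall>k\<in>closure K0. \<exists>x\<in>F. \<epsilon> \<le> \<bar>a x - k x\<bar>" by blast
  define P where "P = (\<lambda>a k. (\<lambda>x. if x \<in> F then a x - k x else 0) :: 'a \<Rightarrow> real)"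
  define T where "T = {P a k | a k. a \<in> A \<and> k \<in> K0}"
  define g where "g = (\<lambda>p::'a\<Rightarrow>real. \<Sum>x\<in>F. (p x)^2)"
  have Tconv: "(\<lambda>x. t * p x + (1 - t) * q x) \<in> T" if p: "p \<in> T" and q: "q \<in> T" and t: "0 \<le> t" "t \<le> (1::real)" for p q t
  proof -
    obtain a1 k1 where 1: "p = P a1 k1" "a1 \<in> A" "k1 \<in> K0" using p T_def by auto
    obtain a2 k2 where 2: "q = P a2 k2" "a2 \<in> A" "k2 \<in> K0" using q T_def by auto
    have a: "(\<lambda>v. t * a1 v + (1-t) * a2 v) \<in> A" using cvA 1 2 t by blast
    have k: "(\<lambda>v. t * k1 v + (1-t) * k2 v) \<in> K0" unfolding K0_def
      by (rule cone_comb) (use 1 2 t K0_def in auto)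
    have "(\<lambda>x. t * p x + (1 - t) * q x) = P (\<lambda>v. t * a1 v + (1-t) * a2 v) (\<lambda>v. t * k1 v + (1-t) * k2 v)"
      unfolding 1 2 P_def by (rule ext) (simp add: algebra_simps)
    then show ?thesis using a k T_def by auto
  qed
  have contg: "continuous_on S g" for S unfolding g_def
    by (intro continuous_on_sum continuous_on_power cont_eval)
  have Z1: "\<forall>p\<in>closure T. \<forall>x. x \<notin> F \<longrightarrow> p x = 0"
  proof -
    have cl: "closed {p::'a\<Rightarrow>real. x \<notin> F \<longrightarrow> p x = 0}" for x
    proof (cases "x \<in> F")
      case True then show ?thesis by simp
    next
      case False
      have "closed {p::'a\<Rightarrow>real. p x = 0}"
        by (rule closed_Collect_eq[OF continuous_on_product_coordinates continuous_on_const])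
      then show ?thesis using False by simp
    qed
    have "closed {p::'a\<Rightarrow>real. \<forall>x. x \<notin> F \<longrightarrow> p x = 0}" by (rule closed_Collect_all) (rule cl)
    moreover have "T \<subseteq> {p::'a\<Rightarrow>real. \<forall>x. x \<notin> F \<longrightarrow> p x = 0}" unfolding T_def P_def by auto
    ultimately have "closure T \<subseteq> {p::'a\<Rightarrow>real. \<forall>x. x \<notin> F \<longrightarrow> p x = 0}" by (rule closure_minimal[rotated])
    then show ?thesis by blast
  qed
  have Z2: "\<forall>p\<in>closure T. \<exists>x\<in>F. \<epsilon> \<le> \<bar>p x\<bar>"
  proof -
    have "open {p::'a\<Rightarrow>real. \<forall>x\<in>F. \<bar>p x - (\<lambda>_. 0) x\<bar> < \<epsilon>}" by (rule open_box_fun[OF F])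
    then have "closed (- {p::'a\<Rightarrow>real. \<forall>x\<in>F. \<bar>p x - (\<lambda>_. 0) x\<bar> < \<epsilon>})" by (simp add: closed_Compl)
    moreover have "T \<subseteq> - {p::'a\<Rightarrow>real. \<forall>x\<in>F. \<bar>p x - (\<lambda>_. 0) x\<bar> < \<epsilon>}"
    proof
      fix p assume "p \<in> T"
      then obtain a k where ak: "p = P a k" "a \<in> A" "k \<in> K0" using T_def by auto
      have "k \<in> closure K0" using ak closure_subset by blast
      then obtain x where x: "x \<in> F" "\<epsilon> \<le> \<bar>a x - k x\<bar>" using Fsep ak by blast
      then have "\<epsilon> \<le> \<bar>p x - (\<lambda>_. 0) x\<bar>" using ak by (simp add: P_def)
      then show "p \<in> - {p::'a\<Rightarrow>real. \<forall>x\<in>F. \<bar>p x - (\<lambda>_. 0) x\<bar> < \<epsilon>}" using x(1) by force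
    qed
    ultimately have "closure T \<subseteq> - {p::'a\<Rightarrow>real. \<forall>x\<in>F. \<bar>p x - (\<lambda>_. 0) x\<bar> < \<epsilon>}" by (rule closure_minimal[rotated])
    then show ?thesis by force
  qed
  obtain a0 where a0: "a0 \<in> A" using False by blast
  define p0 where "p0 = P a0 (\<lambda>v. 0)"
  have p0T: "p0 \<in> T" unfolding p0_def T_def K0_def using a0 cone_0 by blast
  define S where "S = closure T \<inter> {p. g p \<le> g p0}"
  define R where "R = g p0 + 1"
  define B0 where "B0 = PiE UNIV (\<lambda>x. if x \<in> F then {-R..R} else {0::real})"
  have cB0: "compact B0" unfolding B0_def by (rule compact_box)
  have SB0: "S \<subseteq> B0"
  proof
    fix p assume pS: "p \<in> S"
    have "p x \<in> (if x \<in> F then {-R..R} else {0::real})" for x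
    proof (cases "x \<in> F")
      case True
      have "(p x)^2 \<le> g p" unfolding g_def by (rule member_le_sum) (use True F in auto)
      also have "\<dots> \<le> g p0" using pS S_def by auto
      finally have "(p x)^2 \<le> g p0" .
      moreover have "\<bar>p x\<bar> \<le> (p x)^2 + 1"
      proof (cases "\<bar>p x\<bar> \<le> 1")
        case True then show ?thesis by (smt (verit) zero_le_power2)
      next
        case False
        then have "\<bar>p x\<bar> * 1 \<le> \<bar>p x\<bar> * \<bar>p x\<bar>" by (intro mult_left_mono) auto
        then show ?thesis by (simp add: power2_eq_square)
      qed
      ultimately show ?thesis using True by (auto simp: R_def)
    next
      case False
      then show ?thesis using Z1 pS S_def by auto
    qed
    then show "p \<in> B0" unfolding B0_def by auto
  qed
  have clS: "closed S" unfolding S_def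
    by (intro closed_Int closed_closure closed_Collect_le contg continuous_on_const)
  have cS: "compact S"
  proof -
    have "compact (B0 \<inter> S)" using cB0 clS by (rule compact_Int_closed)
    moreover have "B0 \<inter> S = S" using SB0 by blast
    ultimately show ?thesis by simp
  qed
  have p0S: "p0 \<in> S" unfolding S_def using p0T closure_subset by blast
  obtain pm where pmS: "pm \<in> S" and pmmin0: "\<forall>y\<in>S. g pm \<le> g y"
    using continuous_attains_inf[OF cS _ contg] p0S by blast
  have pmT: "pm \<in> closure T" using pmS S_def by blast
  have pmmin: "g pm \<le> g p" if "p \<in> closure T" for p
  proof (cases "g p \<le> g p0")
    case True then show ?thesis using pmmin0 that S_def by auto
  next
    case False then show ?thesis using pmmin0 p0S by force
  qed
  have gpm: "\<epsilon>^2 \<le> g pm"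
  proof -
    obtain x where x: "x \<in> F" "\<epsilon> \<le> \<bar>pm x\<bar>" using Z2 pmT by blast
    have "\<epsilon>^2 \<le> \<bar>pm x\<bar>^2" using x epos by (intro power_mono) auto
    also have "\<dots> = (pm x)^2" by simp
    also have "\<dots> \<le> g pm" unfolding g_def by (rule member_le_sum) (use x F in auto)
    finally show ?thesis .
  qed
  have key: "\<epsilon>^2 \<le> (\<Sum>x\<in>F. pm x * q x)" if qT: "q \<in> T" for q
  proof -
    define d where "d = (\<Sum>x\<in>F. pm x * (q x - pm x))"
    define N where "N = (\<Sum>x\<in>F. (q x - pm x)^2)"
    have "0 \<le> 2*l*d + l^2*N" if l: "0 < l" "l \<le> 1" for l
    proof -
      define h where "h = (\<lambda>p::'a\<Rightarrow>real. \<lambda>x. (1 - l) * p x + l * q x)"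
      have ch: "continuous_on (closure T) h" unfolding h_def
        by (intro continuous_on_coordinatewise_then_product continuous_on_add continuous_on_mult_left
                  cont_eval continuous_on_const)
      have "h ` T \<subseteq> closure T"
      proof
        fix y assume "y \<in> h ` T"
        then obtain p where p: "p \<in> T" "y = h p" by blast
        have "(\<lambda>x. (1 - l) * p x + (1 - (1 - l)) * q x) \<in> T" using Tconv[OF p(1) qT, of "1 - l"] l by simp
        then have "y \<in> T" using p(2) by (simp add: h_def)
        then show "y \<in> closure T" using closure_subset by blast
      qed
      then have "h ` closure T \<subseteq> closure T" by (rule image_closure_subset[OF ch closed_closure])
      then have "h pm \<in> closure T" using pmT by blast
      then have 1: "g pm \<le> g (h pm)" by (rule pmmin)
      have "g (h pm) = (\<Sum>x\<in>F. (pm x)^2 + 2*l*(pm x * (q x - pm x)) + l^2*(q x - pm x)^2)"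
        unfolding g_def h_def by (rule sum.cong) (simp_all add: power2_eq_square algebra_simps)
      also have "\<dots> = g pm + 2*l*d + l^2*N"
        unfolding g_def d_def N_def by (simp add: sum.distrib sum_distrib_left)
      finally show ?thesis using 1 by simp
    qed
    moreover have "0 \<le> N" unfolding N_def by (intro sum_nonneg) simp
    ultimately have "0 \<le> d" using quad_aux by blast
    moreover have "d = (\<Sum>x\<in>F. pm x * q x) - g pm"
      unfolding d_def g_def by (simp add: sum_subtractf right_diff_distrib power2_eq_square)
    ultimately show ?thesis using gpm by simp
  qed
  define v where "v = (\<Sum>x\<in>F. pm x *\<^sub>R x)"
  have lin_eval: "\<phi> v = (\<Sum>x\<in>F. pm x * \<phi> x)" if "linear \<phi>" for \<phi> :: "'a \<Rightarrow> real"
    using that by (simp add: v_def linear_sum linear_scale)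
  have main: "\<epsilon>^2 \<le> a v - t * \<psi> v" if a: "a \<in> A" and \<psi>: "\<psi> \<in> G \<or> t = 0" and t: "0 \<le> t" for a \<psi> t
  proof -
    have kK: "(\<lambda>v. t * \<psi> v) \<in> K0"
    proof (cases "t = 0")
      case True then show ?thesis using cone_0 K0_def by simp
    next
      case False then show ?thesis using \<psi> t cone_single K0_def by auto
    qed
    then have "P a (\<lambda>v. t * \<psi> v) \<in> T" using a T_def by blast
    then have "\<epsilon>^2 \<le> (\<Sum>x\<in>F. pm x * P a (\<lambda>v. t * \<psi> v) x)" by (rule key)
    also have "\<dots> = (\<Sum>x\<in>F. pm x * a x) - t * (\<Sum>x\<in>F. pm x * \<psi> x)"
      unfolding P_def by (simp add: sum_subtractf right_diff_distrib sum_distrib_left algebra_simps)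
    also have "(\<Sum>x\<in>F. pm x * a x) = a v" using lin_eval lA a by simp
    finally have 1: "\<epsilon>^2 \<le> a v - t * (\<Sum>x\<in>F. pm x * \<psi> x)" .
    show ?thesis
    proof (cases "t = 0")
      case True then show ?thesis using 1 by simp
    next
      case False then show ?thesis using 1 lin_eval lG \<psi> by auto
    qed
  qed
  have Apos: "\<epsilon>^2 \<le> a v" if "a \<in> A" for a using main[OF that, of "\<lambda>_. 0" 0] by simp
  have Gneg: "\<psi> v \<le> 0" if "\<psi> \<in> G" for \<psi>
  proof (rule ccontr)
    assume "\<not> \<psi> v \<le> 0"
    then have pos: "\<psi> v > 0" by simp
    have e2: "\<epsilon>^2 > 0" using epos by simp
    have "0 \<le> a0 v" using Apos[OF a0] e2 by linarith
    then have "0 \<le> a0 v / \<psi> v" using pos by simp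
    then have "\<epsilon>^2 \<le> a0 v - (a0 v / \<psi> v) * \<psi> v" using main[OF a0, of \<psi> "a0 v / \<psi> v"] that by blast
    then show False using pos e2 by simp
  qed
  have "\<forall>\<phi>\<in>A. \<phi> (- v) < 0"
  proof
    fix \<phi> assume "\<phi> \<in> A"
    then have "\<phi> (- v) = - \<phi> v" "\<epsilon>^2 \<le> \<phi> v" using lA Apos linear_neg by blast+
    then show "\<phi> (- v) < 0" using epos by (smt (verit) zero_less_power)
  qed
  moreover have "\<forall>\<psi>\<in>G. 0 \<le> \<psi> (- v)"
  proof
    fix \<psi> assume "\<psi> \<in> G"
    then have "\<psi> (- v) = - \<psi> v" "\<psi> v \<le> 0" using lG Gneg linear_neg by blast+
    then show "0 \<le> \<psi> (- v)" by simp
  qed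
  ultimately show ?thesis by blast
qed


definition pconv :: "('a \<Rightarrow> real) set \<Rightarrow> bool" where
  "pconv S \<longleftrightarrow> (\<forall>\<phi>\<in>S. \<forall>\<psi>\<in>S. \<forall>t::real. 0 \<le> t \<and> t \<le> 1 \<longrightarrow> (\<lambda>v. t * \<phi> v + (1 - t) * \<psi> v) \<in> S)"

lemma sup_attained:
  assumes "compact A" "A \<noteq> {}"
  shows "\<exists>a\<in>A. support_fun A v = a v \<and> (\<forall>b\<in>A. b v \<le> a v)"
proof -
  obtain a where a: "a \<in> A" "\<forall>b\<in>A. b v \<le> a v"
    using continuous_attains_sup[OF assms cont_eval] by blast
  have "support_fun A v = a v" unfolding support_fun_def
    by (rule cSup_eq_maximum) (use a in auto)
  then show ?thesis using a by blast
qed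

lemma sup_lt:
  assumes "compact A" "A \<noteq> {}" "\<forall>a\<in>A. a v < 0"
  shows "support_fun A v < 0"
  using sup_attained[OF assms(1,2), of v] assms(3) by auto

lemma sup_le:
  assumes "A \<noteq> {}" "\<forall>a\<in>A. a v \<le> 0"
  shows "support_fun A v \<le> 0"
  unfolding support_fun_def by (rule cSUP_least) (use assms in auto)

lemma le_sup:
  assumes "compact A" "a \<in> A"
  shows "a v \<le> support_fun A v"
proof -
  have "A \<noteq> {}" using assms(2) by blast
  then show ?thesis using sup_attained[OF assms(1), of v] assms(2) by auto
qed

lemma shift_props:
  assumes D: "wstar_convex_compact D" and y: "bounded_linear y"
  shows "compact (shift_set D y)" "pconv (shift_set D y)" "\<forall>\<phi>\<in>shift_set D y. bounded_linear \<phi>"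
proof -
  have cD: "compact D" and lD: "D \<subseteq> dual_space"
    and cvD: "\<forall>\<phi>\<in>D. \<forall>\<psi>\<in>D. \<forall>t::real. 0 \<le> t \<and> t \<le> 1 \<longrightarrow> (\<lambda>v. t * \<phi> v + (1 - t) * \<psi> v) \<in> D"
    using D unfolding wstar_convex_compact_def by auto
  have "continuous_on D (\<lambda>\<phi> v. \<phi> v + y v)"
    by (intro continuous_on_coordinatewise_then_product continuous_on_add cont_eval continuous_on_const)
  then show "compact (shift_set D y)" unfolding shift_set_def by (rule compact_continuous_image[OF _ cD])
  show "pconv (shift_set D y)" unfolding pconv_def
  proof (intro ballI allI impI)
    fix \<phi> \<psi> and t :: real assume "\<phi> \<in> shift_set D y" "\<psi> \<in> shift_set D y" and t: "0 \<le> t \<and> t \<le> 1"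
    then obtain a b where ab: "a \<in> D" "b \<in> D" "\<phi> = (\<lambda>v. a v + y v)" "\<psi> = (\<lambda>v. b v + y v)"
      unfolding shift_set_def by auto
    have "(\<lambda>v. t * a v + (1 - t) * b v) \<in> D" using cvD ab t by blast
    moreover have "(\<lambda>v. t * \<phi> v + (1 - t) * \<psi> v) = (\<lambda>v. (\<lambda>v. t * a v + (1 - t) * b v) v + y v)"
      unfolding ab by (rule ext) (simp add: algebra_simps)
    ultimately show "(\<lambda>v. t * \<phi> v + (1 - t) * \<psi> v) \<in> shift_set D y" unfolding shift_set_def
      by (intro image_eqI[where x="\<lambda>v. t * a v + (1 - t) * b v"]) simp_all
  qed
  show "\<forall>\<phi>\<in>shift_set D y. bounded_linear \<phi>"
    using lD y unfolding shift_set_def dual_space_def by (auto intro!: bounded_linear_add)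
qed

lemma neg_shift_props:
  assumes D: "wstar_convex_compact D" and y: "bounded_linear x"
  shows "compact (neg_shift_set x D)" "pconv (neg_shift_set x D)" "\<forall>\<phi>\<in>neg_shift_set x D. bounded_linear \<phi>"
proof -
  have cD: "compact D" and lD: "D \<subseteq> dual_space"
    and cvD: "\<forall>\<phi>\<in>D. \<forall>\<psi>\<in>D. \<forall>t::real. 0 \<le> t \<and> t \<le> 1 \<longrightarrow> (\<lambda>v. t * \<phi> v + (1 - t) * \<psi> v) \<in> D"
    using D unfolding wstar_convex_compact_def by auto
  have "continuous_on D (\<lambda>\<psi> v. - x v - \<psi> v)"
    by (intro continuous_on_coordinatewise_then_product continuous_on_diff cont_eval continuous_on_const)
  then show "compact (neg_shift_set x D)" unfolding neg_shift_set_def by (rule compact_continuous_image[OF _ cD])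
  show "pconv (neg_shift_set x D)" unfolding pconv_def
  proof (intro ballI allI impI)
    fix \<phi> \<psi> and t :: real assume "\<phi> \<in> neg_shift_set x D" "\<psi> \<in> neg_shift_set x D" and t: "0 \<le> t \<and> t \<le> 1"
    then obtain a b where ab: "a \<in> D" "b \<in> D" "\<phi> = (\<lambda>v. - x v - a v)" "\<psi> = (\<lambda>v. - x v - b v)"
      unfolding neg_shift_set_def by auto
    have "(\<lambda>v. t * a v + (1 - t) * b v) \<in> D" using cvD ab t by blast
    moreover have "(\<lambda>v. t * \<phi> v + (1 - t) * \<psi> v) = (\<lambda>v. - x v - (\<lambda>v. t * a v + (1 - t) * b v) v)"
      unfolding ab by (rule ext) (simp add: algebra_simps)
    ultimately show "(\<lambda>v. t * \<phi> v + (1 - t) * \<psi> v) \<in> neg_shift_set x D" unfolding neg_shift_set_def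
      by (intro image_eqI[where x="\<lambda>v. t * a v + (1 - t) * b v"]) simp_all
  qed
  show "\<forall>\<phi>\<in>neg_shift_set x D. bounded_linear \<phi>"
    using lD y unfolding neg_shift_set_def dual_space_def
    by (auto intro!: bounded_linear_sub bounded_linear_minus)
qed

lemma cone_nonneg:
  assumes "\<forall>\<psi>\<in>G. 0 \<le> \<psi> v" "\<phi> \<in> closure (cone_gen G)"
  shows "0 \<le> \<phi> v"
proof -
  have "cone_gen G \<subseteq> {\<phi>. 0 \<le> \<phi> v}"
  proof
    fix \<phi> assume "\<phi> \<in> cone_gen G"
    then obtain F c where "F \<subseteq> G" "\<forall>\<psi>\<in>F. 0 \<le> c \<psi>" "\<phi> = (\<lambda>v. \<Sum>\<psi>\<in>F. c \<psi> * \<psi> v)"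
      unfolding cone_gen_def by blast
    then show "\<phi> \<in> {\<phi>. 0 \<le> \<phi> v}" using assms(1) by (auto intro!: sum_nonneg)
  qed
  moreover have "closed {\<phi>::'a \<Rightarrow> real. 0 \<le> \<phi> v}"
    by (rule closed_Collect_le[OF continuous_on_const continuous_on_product_coordinates])
  ultimately have "closure (cone_gen G) \<subseteq> {\<phi>. 0 \<le> \<phi> v}" by (rule closure_minimal)
  then show ?thesis using assms(2) by blast
qed

lemma co_neg:
  assumes "\<forall>\<psi>\<in>U. \<psi> v < 0" "\<phi> \<in> co_gen U"
  shows "\<phi> v < 0"
proof -
  obtain F c where F: "finite F" "F \<subseteq> U" "F \<noteq> {}" "\<forall>\<psi>\<in>F. 0 \<le> c \<psi>" "sum c F = 1"
     "\<phi> = (\<lambda>v. \<Sum>\<psi>\<in>F. c \<psi> * \<psi> v)"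
    using assms(2) unfolding co_gen_def by blast
  define M where "M = Max ((\<lambda>\<psi>. \<psi> v) ` F)"
  have M: "M < 0" unfolding M_def using F assms(1) by (subst Max_less_iff) auto
  have "\<phi> v = (\<Sum>\<psi>\<in>F. c \<psi> * \<psi> v)" using F by simp
  also have "\<dots> \<le> (\<Sum>\<psi>\<in>F. c \<psi> * M)"
  proof (rule sum_mono)
    fix \<psi> assume "\<psi> \<in> F"
    then have "\<psi> v \<le> M" unfolding M_def using F(1) by (intro Max_ge) auto
    then show "c \<psi> * \<psi> v \<le> c \<psi> * M" using F(4) \<open>\<psi> \<in> F\<close> by (intro mult_left_mono) auto
  qed
  also have "\<dots> = M" using F(5) by (simp add: sum_distrib_right[symmetric])
  finally show ?thesis using M by simp
qed


definition Dset :: "nat set \<Rightarrow> (nat \<Rightarrow> ('a \<Rightarrow> real) set) \<Rightarrow> (nat \<Rightarrow> real \<times> ('a \<Rightarrow> real)) set" where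
  "Dset J S = {f. (\<forall>j. f j \<in> (if j \<in> J then {0..1} \<times> S j else {(0, \<lambda>v. 0)})) \<and> (\<Sum>j\<in>J. fst (f j)) = 1}"

definition Phi :: "nat set \<Rightarrow> (nat \<Rightarrow> real \<times> ('a \<Rightarrow> real)) \<Rightarrow> 'a \<Rightarrow> real" where
  "Phi J f = (\<lambda>v. \<Sum>j\<in>J. fst (f j) * snd (f j) v)"

lemma cont_eval_gen: "continuous_on S (\<lambda>p::'b \<Rightarrow> 'c::topological_space. p x)"
  by (rule continuous_on_subset[OF continuous_on_product_coordinates]) simp

lemma Astar_compact:
  assumes "\<forall>j\<in>J. compact (S j)"
  shows "compact (Phi J ` Dset J S)"
proof -
  define X where "X = (\<lambda>j. if j \<in> J then {0..1::real} \<times> S j else {(0::real, \<lambda>v::'a. 0::real)})"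
  have "compactin (product_topology (\<lambda>i. euclidean) UNIV) (PiE UNIV X)"
    by (subst compactin_PiE) (auto simp: X_def assms intro!: compact_Times)
  then have c1: "compact (PiE UNIV X)" by (simp add: euclidean_product_topology)
  have c2: "closed {f::nat \<Rightarrow> real \<times> ('a \<Rightarrow> real). (\<Sum>j\<in>J. fst (f j)) = 1}"
    by (intro closed_Collect_eq continuous_on_sum continuous_on_fst cont_eval_gen continuous_on_const)
  have pe: "x \<in> PiE UNIV X \<longleftrightarrow> (\<forall>j. x j \<in> X j)" for x by (simp add: PiE_iff)
  have "Dset J S = PiE UNIV X \<inter> {f. (\<Sum>j\<in>J. fst (f j)) = 1}"
    unfolding Dset_def set_eq_iff Int_iff pe unfolding X_def by simp
  then have cD: "compact (Dset J S)" using compact_Int_closed[OF c1 c2] by simp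
  have "continuous_on (Dset J S) (Phi J)" unfolding Phi_def
  proof (intro continuous_on_coordinatewise_then_product continuous_on_sum continuous_on_mult continuous_on_fst cont_eval_gen)
    fix v j
    have "continuous_on (Dset J S) (\<lambda>f::nat \<Rightarrow> real \<times> ('a \<Rightarrow> real). snd (f j))"
      by (intro continuous_on_snd cont_eval_gen)
    then show "continuous_on (Dset J S) (\<lambda>f::nat \<Rightarrow> real \<times> ('a \<Rightarrow> real). snd (f j) v)"
      by (rule continuous_on_product_then_coordinatewise)
  qed
  then show ?thesis by (rule compact_continuous_image[OF _ cD])
qed

lemma Astar_linear:
  assumes "\<forall>j\<in>J. \<forall>\<phi>\<in>S j. bounded_linear \<phi>"
  shows "\<forall>\<phi>\<in>Phi J ` Dset J S. bounded_linear \<phi>"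
proof
  fix \<phi> assume "\<phi> \<in> Phi J ` Dset J S"
  then obtain f where f: "f \<in> Dset J S" "\<phi> = Phi J f" by blast
  have "bounded_linear (snd (f j))" if "j \<in> J" for j
  proof -
    have "f j \<in> (if j \<in> J then {0..1} \<times> S j else {(0, \<lambda>v. 0)})" using f(1) unfolding Dset_def by blast
    then have "f j \<in> {0..1} \<times> S j" using that by simp
    then show ?thesis using assms that by (simp add: mem_Times_iff)
  qed
  then show "bounded_linear \<phi>" unfolding f(2) Phi_def
    by (intro bounded_linear_sum bounded_linear_const_mult)
qed

lemma Astar_contains:
  assumes "j0 \<in> J" "a \<in> S j0" "\<forall>j\<in>J. S j \<noteq> {}" "finite J"
  shows "a \<in> Phi J ` Dset J S"
proof -
  define f where "f = (\<lambda>j. if j = j0 then (1::real, a) else if j \<in> J then (0, SOME b. b \<in> S j) else (0, \<lambda>v. 0))"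
  have "f j \<in> (if j \<in> J then {0..1} \<times> S j else {(0, \<lambda>v. 0)})" for j
  proof (cases "j = j0")
    case True then show ?thesis using assms by (simp add: f_def)
  next
    case False
    show ?thesis
    proof (cases "j \<in> J")
      case True
      then obtain b where "b \<in> S j" using assms(3) by blast
      then have "(SOME b. b \<in> S j) \<in> S j" by (rule someI[where P="\<lambda>b. b \<in> S j"])
      then show ?thesis using False True by (simp add: f_def)
    qed (use False in \<open>simp add: f_def\<close>)
  qed
  moreover have "(\<Sum>j\<in>J. fst (f j)) = 1"
  proof -
    have "(\<Sum>j\<in>J. fst (f j)) = (\<Sum>j\<in>J. if j = j0 then 1 else 0)" by (rule sum.cong) (auto simp: f_def)
    then show ?thesis using assms(1,4) by simp
  qed
  ultimately have "f \<in> Dset J S" unfolding Dset_def by blast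
  moreover have "Phi J f = a"
  proof
    fix v
    have "Phi J f v = (\<Sum>j\<in>J. if j = j0 then a v else 0)" unfolding Phi_def by (rule sum.cong) (auto simp: f_def)
    then show "Phi J f v = a v" using assms(1,4) by simp
  qed
  ultimately show ?thesis by (intro image_eqI[where x=f]) simp_all
qed

lemma Astar_co:
  assumes "finite J"
  shows "Phi J ` Dset J S \<subseteq> co_gen (\<Union>j\<in>J. S j)"
proof
  fix \<phi> assume "\<phi> \<in> Phi J ` Dset J S"
  then obtain f where f: "f \<in> Dset J S" "\<phi> = Phi J f" by blast
  have fj: "fst (f j) \<in> {0..1} \<and> snd (f j) \<in> S j" if "j \<in> J" for j
  proof -
    have "f j \<in> (if j \<in> J then {0..1} \<times> S j else {(0, \<lambda>v. 0)})" using f(1) unfolding Dset_def by blast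
    then have "f j \<in> {0..1} \<times> S j" using that by simp
    then show ?thesis by (simp add: mem_Times_iff)
  qed
  have s1: "(\<Sum>j\<in>J. fst (f j)) = 1" using f(1) unfolding Dset_def by blast
  then have Jne: "J \<noteq> {}" by auto
  define F where "F = (\<lambda>j. snd (f j)) ` J"
  define c where "c = (\<lambda>\<psi>. \<Sum>j\<in>{j. j \<in> J \<and> snd (f j) = \<psi>}. fst (f j))"
  have "finite F" "F \<subseteq> (\<Union>j\<in>J. S j)" "F \<noteq> {}" using assms Jne fj by (auto simp: F_def)
  moreover have "\<forall>\<psi>\<in>F. 0 \<le> c \<psi>" unfolding c_def using fj by (auto intro!: sum_nonneg)
  moreover have "sum c F = 1" unfolding c_def F_def using sum.image_gen[OF assms, of "\<lambda>j. fst (f j)" "\<lambda>j. snd (f j)"] s1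
    by simp
  moreover have "\<phi> = (\<lambda>v. \<Sum>\<psi>\<in>F. c \<psi> * \<psi> v)"
  proof
    fix v
    have "\<phi> v = (\<Sum>j\<in>J. fst (f j) * snd (f j) v)" using f(2) by (simp add: Phi_def)
    also have "\<dots> = (\<Sum>\<psi>\<in>F. \<Sum>j\<in>{j. j \<in> J \<and> snd (f j) = \<psi>}. fst (f j) * snd (f j) v)"
      unfolding F_def by (rule sum.image_gen[OF assms])
    also have "\<dots> = (\<Sum>\<psi>\<in>F. c \<psi> * \<psi> v)"
      unfolding c_def sum_distrib_right by (intro sum.cong refl) auto
    finally show "\<phi> v = (\<Sum>\<psi>\<in>F. c \<psi> * \<psi> v)" .
  qed
  ultimately show "\<phi> \<in> co_gen (\<Union>j\<in>J. S j)" unfolding co_gen_def by blast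
qed


lemma Dset_mem:
  assumes "f \<in> Dset J S" "j \<in> J"
  shows "0 \<le> fst (f j) \<and> fst (f j) \<le> 1 \<and> snd (f j) \<in> S j"
proof -
  have "f j \<in> (if j \<in> J then {0..1} \<times> S j else {(0, \<lambda>v. 0)})" using assms(1) unfolding Dset_def by blast
  then have "f j \<in> {0..1} \<times> S j" using assms(2) by simp
  then show ?thesis by (simp add: mem_Times_iff)
qed

lemma Astar_conv:
  assumes cv: "\<forall>j\<in>J. pconv (S j)"
  shows "pconv (Phi J ` Dset J S)"
  unfolding pconv_def
proof (intro ballI allI impI)
  fix \<phi> \<psi> and t::real assume "\<phi> \<in> Phi J ` Dset J S" "\<psi> \<in> Phi J ` Dset J S" and t: "0 \<le> t \<and> t \<le> 1"
  then obtain f g where f: "f \<in> Dset J S" "\<phi> = Phi J f" and g: "g \<in> Dset J S" "\<psi> = Phi J g" by blast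
  have fs: "(\<Sum>j\<in>J. fst (f j)) = 1" using f(1) unfolding Dset_def by blast
  have gs: "(\<Sum>j\<in>J. fst (g j)) = 1" using g(1) unfolding Dset_def by blast
  define \<nu> where "\<nu> = (\<lambda>j. t * fst (f j) + (1 - t) * fst (g j))"
  define c where "c = (\<lambda>j. if \<nu> j = 0 then snd (f j)
      else (\<lambda>v. (t * fst (f j) * snd (f j) v + (1 - t) * fst (g j) * snd (g j) v) / \<nu> j))"
  define h where "h = (\<lambda>j. if j \<in> J then (\<nu> j, c j) else (0, \<lambda>v::'a. 0::real))"
  have nn: "0 \<le> t * fst (f j)" "0 \<le> (1 - t) * fst (g j)" if "j \<in> J" for j
    using Dset_mem[OF f(1) that] Dset_mem[OF g(1) that] t by auto
  have \<nu>1: "0 \<le> \<nu> j \<and> \<nu> j \<le> 1" if "j \<in> J" for j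
  proof -
    have "t * fst (f j) \<le> t * 1" "(1 - t) * fst (g j) \<le> (1 - t) * 1"
      using Dset_mem[OF f(1) that] Dset_mem[OF g(1) that] t by (intro mult_left_mono; simp)+
    then show ?thesis using nn[OF that] by (simp add: \<nu>_def)
  qed
  have cS: "c j \<in> S j" if j: "j \<in> J" for j
  proof (cases "\<nu> j = 0")
    case True then show ?thesis using Dset_mem[OF f(1) j] by (simp add: c_def)
  next
    case False
    define s where "s = t * fst (f j) / \<nu> j"
    have \<nu>pos: "\<nu> j > 0" using \<nu>1[OF j] False by simp
    have s01: "0 \<le> s" "s \<le> 1" using nn[OF j] \<nu>pos by (auto simp: s_def \<nu>_def)
    have s1: "1 - s = (1 - t) * fst (g j) / \<nu> j" using \<nu>pos by (simp add: s_def \<nu>_def field_simps)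
    have "c j = (\<lambda>v. s * snd (f j) v + ((1 - t) * fst (g j) / \<nu> j) * snd (g j) v)"
      using False by (simp add: c_def s_def add_divide_distrib)
    then have "c j = (\<lambda>v. s * snd (f j) v + (1 - s) * snd (g j) v)" by (simp only: s1)
    moreover have "(\<lambda>v. s * snd (f j) v + (1 - s) * snd (g j) v) \<in> S j"
      using cv j Dset_mem[OF f(1) j] Dset_mem[OF g(1) j] s01 unfolding pconv_def by blast
    ultimately show ?thesis by simp
  qed
  have "h \<in> Dset J S"
  proof -
    have "h j \<in> (if j \<in> J then {0..1} \<times> S j else {(0, \<lambda>v. 0)})" for j
      using \<nu>1 cS by (simp add: h_def)
    moreover have "(\<Sum>j\<in>J. fst (h j)) = 1"
    proof -
      have "(\<Sum>j\<in>J. fst (h j)) = (\<Sum>j\<in>J. t * fst (f j) + (1 - t) * fst (g j))"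
        by (rule sum.cong) (simp_all add: h_def \<nu>_def)
      also have "\<dots> = t * (\<Sum>j\<in>J. fst (f j)) + (1 - t) * (\<Sum>j\<in>J. fst (g j))"
        by (simp add: sum.distrib sum_distrib_left)
      finally show ?thesis using fs gs by simp
    qed
    ultimately show ?thesis unfolding Dset_def by blast
  qed
  moreover have "Phi J h = (\<lambda>v. t * \<phi> v + (1 - t) * \<psi> v)"
  proof
    fix v
    have hterm: "fst (h j) * snd (h j) v = t * (fst (f j) * snd (f j) v) + (1 - t) * (fst (g j) * snd (g j) v)"
      if j: "j \<in> J" for j
    proof (cases "\<nu> j = 0")
      case True
      then have "t * fst (f j) + (1 - t) * fst (g j) = 0" by (simp add: \<nu>_def)
      then have "t * fst (f j) = 0" "(1 - t) * fst (g j) = 0" using nn[OF j] by linarith+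
      then have "t * (fst (f j) * snd (f j) v) = 0" "(1 - t) * (fst (g j) * snd (g j) v) = 0"
        by (simp_all only: mult.assoc[symmetric])
      note eqs = this
      have z: "fst (h j) = 0" using True j by (simp add: h_def)
      show ?thesis by (simp only: z eqs mult_zero_left add_0)
    next
      case False
      have "fst (h j) * snd (h j) v = \<nu> j * ((t * fst (f j) * snd (f j) v + (1 - t) * fst (g j) * snd (g j) v) / \<nu> j)"
        using False j by (simp add: h_def c_def)
      also have "\<dots> = t * fst (f j) * snd (f j) v + (1 - t) * fst (g j) * snd (g j) v"
        using False by simp
      finally show ?thesis by (simp add: mult.assoc)
    qed
    have "Phi J h v = (\<Sum>j\<in>J. t * (fst (f j) * snd (f j) v) + (1 - t) * (fst (g j) * snd (g j) v))"
      unfolding Phi_def by (rule sum.cong[OF refl hterm])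
    also have "\<dots> = t * \<phi> v + (1 - t) * \<psi> v"
      unfolding f(2) g(2) Phi_def by (simp add: sum.distrib sum_distrib_left)
    finally show "Phi J h v = t * \<phi> v + (1 - t) * \<psi> v" .
  qed
  ultimately show "(\<lambda>v. t * \<phi> v + (1 - t) * \<psi> v) \<in> Phi J ` Dset J S"
    by (intro image_eqI[where x=h]) simp_all
qed

theorem proposition1:
  fixes f g :: "nat \<Rightarrow> 'a::banach \<Rightarrow> real"
    and m l :: nat
    and xbar :: 'a
    and Dlf Duf Dlg Dug :: "nat \<Rightarrow> ('a \<Rightarrow> real) set"
    and xs ys zs :: "nat \<Rightarrow> ('a \<Rightarrow> real)"
  defines "M \<equiv> {x. (\<forall>i\<in>{1..m}. f i x = 0) \<and> (\<forall>j\<in>{1..l}. g j x \<le> 0)}"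
    and "Jx \<equiv> {j\<in>{1..l}. g j xbar = 0}"
    and "A \<equiv> (\<lambda>i. shift_set (Dlf i) (ys i))"
    and "B \<equiv> (\<lambda>i. neg_shift_set (xs i) (Duf i))"
    and "C \<equiv> (\<lambda>i. shift_set (Dlf i) (ys i) \<union> neg_shift_set (xs i) (Duf i))"
  assumes xbar_M: "xbar \<in> M"
    and qf: "\<forall>i\<in>{1..m}. quasidifferentiable_with (f i) xbar (Dlf i) (Duf i)"
    and qg: "\<forall>j\<in>Jx. quasidifferentiable_with (g j) xbar (Dlg j) (Dug j)"
    and xs_in: "\<forall>i\<in>{1..m}. xs i \<in> Dlf i"
    and ys_in: "\<forall>i\<in>{1..m}. ys i \<in> Duf i"
    and zs_in: "\<forall>j\<in>Jx. zs j \<in> Dug j"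
  shows "((\<forall>i\<in>{1..m}. \<exists>v. support_fun (A i) v < 0 \<and>
              (\<forall>k\<in>{1..m}. k \<noteq> i \<longrightarrow> support_fun (A k) v \<le> 0 \<and> support_fun (B k) v \<le> 0)) \<and>
          (\<forall>i\<in>{1..m}. \<exists>w. support_fun (B i) w < 0 \<and>
              (\<forall>k\<in>{1..m}. k \<noteq> i \<longrightarrow> support_fun (B k) w \<le> 0 \<and> support_fun (A k) w \<le> 0)) \<and>
          (\<exists>v0. (\<forall>j\<in>Jx. support_fun (shift_set (Dlg j) (zs j)) v0 < 0) \<and>
              (\<forall>i\<in>{1..m}. support_fun (A i) v0 \<le> 0 \<and> support_fun (B i) v0 \<le> 0)))
     \<longleftrightarrow>
         ((\<forall>i\<in>{1..m}. C i \<inter> wstar_closure (cone_gen (\<Union>k\<in>{1..m} - {i}. neg_set (C k))) = {}) \<and>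
          co_gen (\<Union>j\<in>Jx. shift_set (Dlg j) (zs j))
            \<inter> wstar_closure (cone_gen (\<Union>i\<in>{1..m}. neg_set (C i))) = {})"
proof -
  have Jfin: "finite Jx" unfolding Jx_def by simp
  have qf': "wstar_convex_compact (Dlf i) \<and> wstar_convex_compact (Duf i) \<and> Dlf i \<noteq> {} \<and> Duf i \<noteq> {}"
    if "i \<in> {1..m}" for i using qf that unfolding quasidifferentiable_with_def by blast
  have qg': "wstar_convex_compact (Dlg j) \<and> wstar_convex_compact (Dug j) \<and> Dlg j \<noteq> {} \<and> Dug j \<noteq> {}"
    if "j \<in> Jx" for j using qg that unfolding quasidifferentiable_with_def by blast
  have blx: "bounded_linear (xs i)" if "i \<in> {1..m}" for i
    using xs_in qf'[OF that] that unfolding wstar_convex_compact_def dual_space_def by blast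
  have bly: "bounded_linear (ys i)" if "i \<in> {1..m}" for i
    using ys_in qf'[OF that] that unfolding wstar_convex_compact_def dual_space_def by blast
  have blz: "bounded_linear (zs j)" if "j \<in> Jx" for j
    using zs_in qg'[OF that] that unfolding wstar_convex_compact_def dual_space_def by blast
  have Aprops: "compact (A i) \<and> pconv (A i) \<and> (\<forall>\<phi>\<in>A i. bounded_linear \<phi>) \<and> A i \<noteq> {}"
    if i: "i \<in> {1..m}" for i
    using shift_props[of "Dlf i" "ys i"] qf'[OF i] bly[OF i] unfolding A_def shift_set_def by auto
  have Bprops: "compact (B i) \<and> pconv (B i) \<and> (\<forall>\<phi>\<in>B i. bounded_linear \<phi>) \<and> B i \<noteq> {}"
    if i: "i \<in> {1..m}" for i
    using neg_shift_props[of "Duf i" "xs i"] qf'[OF i] blx[OF i] unfolding B_def neg_shift_set_def by auto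
  define S where "S = (\<lambda>j. shift_set (Dlg j) (zs j))"
  have Sprops: "compact (S j) \<and> pconv (S j) \<and> (\<forall>\<phi>\<in>S j. bounded_linear \<phi>) \<and> S j \<noteq> {}"
    if j: "j \<in> Jx" for j
    using shift_props[of "Dlg j" "zs j"] qg'[OF j] blz[OF j] unfolding S_def shift_set_def by auto
  have CAB: "C i = A i \<union> B i" for i unfolding A_def B_def C_def by simp
  have negmem: "(\<lambda>v. - ch v) \<in> neg_set (C k)" if "ch \<in> C k" for ch k
    using that unfolding neg_set_def by blast
  have neglin: "linear \<psi>" if \<psi>: "\<psi> \<in> neg_set (C k)" and k: "k \<in> {1..m}" for \<psi> k
  proof -
    obtain ch where ch: "ch \<in> C k" "\<psi> = (\<lambda>v. - ch v)" using \<psi> unfolding neg_set_def by blast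
    have "bounded_linear ch" using ch(1) Aprops[OF k] Bprops[OF k] CAB by blast
    then have "bounded_linear \<psi>" using ch(2) bounded_linear_minus by blast
    then show ?thesis by (rule bounded_linear.linear)
  qed
  have HA: "support_fun (A k) v \<le> 0 \<and> support_fun (B k) v \<le> 0"
    if k: "k \<in> {1..m}" and h: "\<forall>\<psi>\<in>neg_set (C k). 0 \<le> \<psi> v" for k v
  proof -
    have "\<forall>ch\<in>C k. ch v \<le> 0"
    proof
      fix ch assume "ch \<in> C k"
      then have "(\<lambda>v. - ch v) \<in> neg_set (C k)" by (rule negmem)
      from bspec[OF h this] show "ch v \<le> 0" by simp
    qed
    then have "\<forall>a\<in>A k. a v \<le> 0" "\<forall>a\<in>B k. a v \<le> 0" using CAB by auto
    then show ?thesis using sup_le[of "A k" v] sup_le[of "B k" v] Aprops[OF k] Bprops[OF k] by blast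
  qed
  have HB: "\<forall>\<psi>\<in>neg_set (C k). 0 \<le> \<psi> v"
    if k: "k \<in> {1..m}" and h: "support_fun (A k) v \<le> 0 \<and> support_fun (B k) v \<le> 0" for k v
  proof
    fix \<psi> assume "\<psi> \<in> neg_set (C k)"
    then obtain ch where ch: "ch \<in> C k" "\<psi> = (\<lambda>v. - ch v)" unfolding neg_set_def by blast
    have "ch v \<le> 0"
    proof (cases "ch \<in> A k")
      case True then show ?thesis using le_sup[of "A k" ch v] Aprops[OF k] h by linarith
    next
      case False then have "ch \<in> B k" using ch(1) CAB by blast
      then show ?thesis using le_sup[of "B k" ch v] Bprops[OF k] h by linarith
    qed
    then show "0 \<le> \<psi> v" using ch(2) by simp
  qed
  have wcl: "wstar_closure X = closure X \<inter> dual_space" for X :: "('a \<Rightarrow> real) set"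
    by (simp add: wstar_closure_def)
  show ?thesis
  proof
    assume L: "(\<forall>i\<in>{1..m}. \<exists>v. support_fun (A i) v < 0 \<and>
              (\<forall>k\<in>{1..m}. k \<noteq> i \<longrightarrow> support_fun (A k) v \<le> 0 \<and> support_fun (B k) v \<le> 0)) \<and>
          (\<forall>i\<in>{1..m}. \<exists>w. support_fun (B i) w < 0 \<and>
              (\<forall>k\<in>{1..m}. k \<noteq> i \<longrightarrow> support_fun (B k) w \<le> 0 \<and> support_fun (A k) w \<le> 0)) \<and>
          (\<exists>v0. (\<forall>j\<in>Jx. support_fun (shift_set (Dlg j) (zs j)) v0 < 0) \<and>
              (\<forall>i\<in>{1..m}. support_fun (A i) v0 \<le> 0 \<and> support_fun (B i) v0 \<le> 0))"
    have R1: "C i \<inter> wstar_closure (cone_gen (\<Union>k\<in>{1..m} - {i}. neg_set (C k))) = {}" if i: "i \<in> {1..m}" for i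
    proof (rule ccontr)
      assume "C i \<inter> wstar_closure (cone_gen (\<Union>k\<in>{1..m} - {i}. neg_set (C k))) \<noteq> {}"
      then obtain \<phi> where \<phi>C: "\<phi> \<in> C i" and \<phi>cl: "\<phi> \<in> closure (cone_gen (\<Union>k\<in>{1..m} - {i}. neg_set (C k)))"
        unfolding wcl by blast
      show False
      proof (cases "\<phi> \<in> A i")
        case True
        obtain v where v: "support_fun (A i) v < 0"
          "\<forall>k\<in>{1..m}. k \<noteq> i \<longrightarrow> support_fun (A k) v \<le> 0 \<and> support_fun (B k) v \<le> 0"
          using L i by blast
        have "\<forall>\<psi>\<in>(\<Union>k\<in>{1..m} - {i}. neg_set (C k)). 0 \<le> \<psi> v"
        proof
          fix \<psi> assume "\<psi> \<in> (\<Union>k\<in>{1..m} - {i}. neg_set (C k))"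
          then obtain k where k: "k \<in> {1..m}" "k \<noteq> i" "\<psi> \<in> neg_set (C k)" by blast
          have "support_fun (A k) v \<le> 0 \<and> support_fun (B k) v \<le> 0" using v(2) k(1,2) by auto
          from bspec[OF HB[OF k(1) this] k(3)] show "0 \<le> \<psi> v" .
        qed
        then have "0 \<le> \<phi> v" using \<phi>cl by (rule cone_nonneg)
        moreover have "\<phi> v \<le> support_fun (A i) v" using Aprops[OF i] True by (intro le_sup) auto
        ultimately show False using v(1) by linarith
      next
        case False
        then have \<phi>B: "\<phi> \<in> B i" using \<phi>C CAB by blast
        obtain v where v: "support_fun (B i) v < 0"
          "\<forall>k\<in>{1..m}. k \<noteq> i \<longrightarrow> support_fun (B k) v \<le> 0 \<and> support_fun (A k) v \<le> 0"
          using L i by blast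
        have "\<forall>\<psi>\<in>(\<Union>k\<in>{1..m} - {i}. neg_set (C k)). 0 \<le> \<psi> v"
        proof
          fix \<psi> assume "\<psi> \<in> (\<Union>k\<in>{1..m} - {i}. neg_set (C k))"
          then obtain k where k: "k \<in> {1..m}" "k \<noteq> i" "\<psi> \<in> neg_set (C k)" by blast
          have "support_fun (A k) v \<le> 0 \<and> support_fun (B k) v \<le> 0" using v(2) k(1,2) by auto
          from bspec[OF HB[OF k(1) this] k(3)] show "0 \<le> \<psi> v" .
        qed
        then have "0 \<le> \<phi> v" using \<phi>cl by (rule cone_nonneg)
        moreover have "\<phi> v \<le> support_fun (B i) v" using Bprops[OF i] \<phi>B by (intro le_sup) auto
        ultimately show False using v(1) by linarith
      qed
    qed
    have R2: "co_gen (\<Union>j\<in>Jx. shift_set (Dlg j) (zs j)) \<inter> wstar_closure (cone_gen (\<Union>i\<in>{1..m}. neg_set (C i))) = {}"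
    proof (rule ccontr)
      assume "co_gen (\<Union>j\<in>Jx. shift_set (Dlg j) (zs j)) \<inter> wstar_closure (cone_gen (\<Union>i\<in>{1..m}. neg_set (C i))) \<noteq> {}"
      then obtain \<phi> where \<phi>co: "\<phi> \<in> co_gen (\<Union>j\<in>Jx. shift_set (Dlg j) (zs j))"
        and \<phi>cl: "\<phi> \<in> closure (cone_gen (\<Union>i\<in>{1..m}. neg_set (C i)))"
        unfolding wcl by blast
      obtain v0 where v0: "\<forall>j\<in>Jx. support_fun (shift_set (Dlg j) (zs j)) v0 < 0"
        "\<forall>i\<in>{1..m}. support_fun (A i) v0 \<le> 0 \<and> support_fun (B i) v0 \<le> 0"
        using L by blast
      have "\<forall>\<psi>\<in>(\<Union>j\<in>Jx. shift_set (Dlg j) (zs j)). \<psi> v0 < 0"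
      proof
        fix \<psi> assume "\<psi> \<in> (\<Union>j\<in>Jx. shift_set (Dlg j) (zs j))"
        then obtain j where j: "j \<in> Jx" "\<psi> \<in> S j" unfolding S_def by blast
        have "\<psi> v0 \<le> support_fun (S j) v0" using Sprops[OF j(1)] j(2) by (intro le_sup) auto
        then show "\<psi> v0 < 0" using v0(1) j(1) unfolding S_def by fastforce
      qed
      then have "\<phi> v0 < 0" using \<phi>co by (rule co_neg)
      moreover have "\<forall>\<psi>\<in>(\<Union>i\<in>{1..m}. neg_set (C i)). 0 \<le> \<psi> v0"
      proof
        fix \<psi> assume "\<psi> \<in> (\<Union>i\<in>{1..m}. neg_set (C i))"
        then obtain k where k: "k \<in> {1..m}" "\<psi> \<in> neg_set (C k)" by blast
        from bspec[OF HB[OF k(1)] k(2)] show "0 \<le> \<psi> v0" using v0(2) k(1) by blast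
      qed
      then have "0 \<le> \<phi> v0" using \<phi>cl by (rule cone_nonneg)
      ultimately show False by linarith
    qed
    show "(\<forall>i\<in>{1..m}. C i \<inter> wstar_closure (cone_gen (\<Union>k\<in>{1..m} - {i}. neg_set (C k))) = {}) \<and>
          co_gen (\<Union>j\<in>Jx. shift_set (Dlg j) (zs j))
            \<inter> wstar_closure (cone_gen (\<Union>i\<in>{1..m}. neg_set (C i))) = {}"
      using R1 R2 by blast
  next
    assume R: "(\<forall>i\<in>{1..m}. C i \<inter> wstar_closure (cone_gen (\<Union>k\<in>{1..m} - {i}. neg_set (C k))) = {}) \<and>
          co_gen (\<Union>j\<in>Jx. shift_set (Dlg j) (zs j))
            \<inter> wstar_closure (cone_gen (\<Union>i\<in>{1..m}. neg_set (C i))) = {}"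
    have linGi: "\<forall>\<psi>\<in>(\<Union>k\<in>{1..m} - {i}. neg_set (C k)). linear \<psi>" for i
    proof
      fix \<psi> assume "\<psi> \<in> (\<Union>k\<in>{1..m} - {i}. neg_set (C k))"
      then obtain k where k: "k \<in> {1..m}" "\<psi> \<in> neg_set (C k)" by blast
      show "linear \<psi>" by (rule neglin[OF k(2) k(1)])
    qed
    have linGall: "\<forall>\<psi>\<in>(\<Union>k\<in>{1..m}. neg_set (C k)). linear \<psi>"
    proof
      fix \<psi> assume "\<psi> \<in> (\<Union>k\<in>{1..m}. neg_set (C k))"
      then obtain k where k: "k \<in> {1..m}" "\<psi> \<in> neg_set (C k)" by blast
      show "linear \<psi>" by (rule neglin[OF k(2) k(1)])
    qed
    have Gsub: "\<forall>\<psi>\<in>neg_set (C k). 0 \<le> \<psi> v"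
      if "\<forall>\<psi>\<in>(\<Union>k\<in>K. neg_set (C k)). 0 \<le> \<psi> v" "k \<in> K" for K k v
    proof
      fix \<psi> assume "\<psi> \<in> neg_set (C k)"
      then have "\<psi> \<in> (\<Union>k\<in>K. neg_set (C k))" using that(2) by blast
      then show "0 \<le> \<psi> v" using that(1) by blast
    qed
    have L1: "\<exists>v. support_fun (A i) v < 0 \<and>
              (\<forall>k\<in>{1..m}. k \<noteq> i \<longrightarrow> support_fun (A k) v \<le> 0 \<and> support_fun (B k) v \<le> 0)"
      if i: "i \<in> {1..m}" for i
    proof -
      have disj: "A i \<inter> closure (cone_gen (\<Union>k\<in>{1..m} - {i}. neg_set (C k))) = {}"
      proof (rule equals0I)
        fix \<phi> assume \<phi>: "\<phi> \<in> A i \<inter> closure (cone_gen (\<Union>k\<in>{1..m} - {i}. neg_set (C k)))"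
        then have "\<phi> \<in> dual_space" using Aprops[OF i] unfolding dual_space_def by blast
        then have "\<phi> \<in> C i \<inter> wstar_closure (cone_gen (\<Union>k\<in>{1..m} - {i}. neg_set (C k)))"
          using \<phi> CAB unfolding wcl by blast
        then show False using R i by blast
      qed
      have cA: "compact (A i)" and cvA: "pconv (A i)" and lA: "\<forall>\<phi>\<in>A i. linear \<phi>"
        using Aprops[OF i] bounded_linear.linear by blast+
      obtain v where v: "\<forall>\<phi>\<in>A i. \<phi> v < 0" "\<forall>\<psi>\<in>(\<Union>k\<in>{1..m} - {i}. neg_set (C k)). 0 \<le> \<psi> v"
        using sep[OF cA cvA[unfolded pconv_def] lA linGi disj] by blast
      have "support_fun (A i) v < 0" using Aprops[OF i] v(1) by (intro sup_lt) auto
      moreover have "support_fun (A k) v \<le> 0 \<and> support_fun (B k) v \<le> 0" if k: "k \<in> {1..m}" "k \<noteq> i" for k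
      proof -
        have "k \<in> {1..m} - {i}" using k by blast
        from HA[OF k(1) Gsub[OF v(2) this]] show ?thesis by blast
      qed
      ultimately show ?thesis by blast
    qed
    have L2: "\<exists>w. support_fun (B i) w < 0 \<and>
              (\<forall>k\<in>{1..m}. k \<noteq> i \<longrightarrow> support_fun (B k) w \<le> 0 \<and> support_fun (A k) w \<le> 0)"
      if i: "i \<in> {1..m}" for i
    proof -
      have disj: "B i \<inter> closure (cone_gen (\<Union>k\<in>{1..m} - {i}. neg_set (C k))) = {}"
      proof (rule equals0I)
        fix \<phi> assume \<phi>: "\<phi> \<in> B i \<inter> closure (cone_gen (\<Union>k\<in>{1..m} - {i}. neg_set (C k)))"
        then have "\<phi> \<in> dual_space" using Bprops[OF i] unfolding dual_space_def by blast
        then have "\<phi> \<in> C i \<inter> wstar_closure (cone_gen (\<Union>k\<in>{1..m} - {i}. neg_set (C k)))"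
          using \<phi> CAB unfolding wcl by blast
        then show False using R i by blast
      qed
      have cA: "compact (B i)" and cvA: "pconv (B i)" and lA: "\<forall>\<phi>\<in>B i. linear \<phi>"
        using Bprops[OF i] bounded_linear.linear by blast+
      obtain v where v: "\<forall>\<phi>\<in>B i. \<phi> v < 0" "\<forall>\<psi>\<in>(\<Union>k\<in>{1..m} - {i}. neg_set (C k)). 0 \<le> \<psi> v"
        using sep[OF cA cvA[unfolded pconv_def] lA linGi disj] by blast
      have "support_fun (B i) v < 0" using Bprops[OF i] v(1) by (intro sup_lt) auto
      moreover have "support_fun (B k) v \<le> 0 \<and> support_fun (A k) v \<le> 0" if k: "k \<in> {1..m}" "k \<noteq> i" for k
      proof -
        have "k \<in> {1..m} - {i}" using k by blast
        from HA[OF k(1) Gsub[OF v(2) this]] show ?thesis by blast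
      qed
      ultimately show ?thesis by blast
    qed
    have L3: "\<exists>v0. (\<forall>j\<in>Jx. support_fun (shift_set (Dlg j) (zs j)) v0 < 0) \<and>
              (\<forall>i\<in>{1..m}. support_fun (A i) v0 \<le> 0 \<and> support_fun (B i) v0 \<le> 0)"
    proof -
      define As where "As = Phi Jx ` Dset Jx S"
      have cAs: "compact As" unfolding As_def by (rule Astar_compact) (use Sprops in blast)
      have pAs: "pconv As" unfolding As_def by (rule Astar_conv) (use Sprops in blast)
      have bAs: "\<forall>\<phi>\<in>As. bounded_linear \<phi>" unfolding As_def by (rule Astar_linear) (use Sprops in blast)
      have coAs: "As \<subseteq> co_gen (\<Union>j\<in>Jx. S j)" unfolding As_def by (rule Astar_co[OF Jfin])
      have disj: "As \<inter> closure (cone_gen (\<Union>k\<in>{1..m}. neg_set (C k))) = {}"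
      proof (rule equals0I)
        fix \<phi> assume \<phi>: "\<phi> \<in> As \<inter> closure (cone_gen (\<Union>k\<in>{1..m}. neg_set (C k)))"
        then have "\<phi> \<in> dual_space" using bAs unfolding dual_space_def by blast
        moreover have "\<phi> \<in> co_gen (\<Union>j\<in>Jx. shift_set (Dlg j) (zs j))" using \<phi> coAs unfolding S_def by blast
        ultimately have "\<phi> \<in> co_gen (\<Union>j\<in>Jx. shift_set (Dlg j) (zs j)) \<inter> wstar_closure (cone_gen (\<Union>i\<in>{1..m}. neg_set (C i)))"
          using \<phi> unfolding wcl by blast
        then show False using R by blast
      qed
      have lAs: "\<forall>\<phi>\<in>As. linear \<phi>" using bAs bounded_linear.linear by blast
      obtain v where v: "\<forall>\<phi>\<in>As. \<phi> v < 0" "\<forall>\<psi>\<in>(\<Union>k\<in>{1..m}. neg_set (C k)). 0 \<le> \<psi> v"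
        using sep[OF cAs pAs[unfolded pconv_def] lAs linGall disj] by blast
      have "support_fun (shift_set (Dlg j) (zs j)) v < 0" if j: "j \<in> Jx" for j
      proof -
        have "S j \<subseteq> As" unfolding As_def
        proof
          fix a assume "a \<in> S j"
          then show "a \<in> Phi Jx ` Dset Jx S"
            by (rule Astar_contains[OF j]) (use Sprops Jfin in blast)+
        qed
        then have "\<forall>a\<in>S j. a v < 0" using v(1) by blast
        then have "support_fun (S j) v < 0" using Sprops[OF j] by (intro sup_lt) auto
        then show ?thesis unfolding S_def .
      qed
      moreover have "support_fun (A i) v \<le> 0 \<and> support_fun (B i) v \<le> 0" if i: "i \<in> {1..m}" for i
        by (rule HA[OF i Gsub[OF v(2) i]])
      ultimately show ?thesis by blast
    qed
    show "(\<forall>i\<in>{1..m}. \<exists>v. support_fun (A i) v < 0 \<and>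
              (\<forall>k\<in>{1..m}. k \<noteq> i \<longrightarrow> support_fun (A k) v \<le> 0 \<and> support_fun (B k) v \<le> 0)) \<and>
          (\<forall>i\<in>{1..m}. \<exists>w. support_fun (B i) w < 0 \<and>
              (\<forall>k\<in>{1..m}. k \<noteq> i \<longrightarrow> support_fun (B k) w \<le> 0 \<and> support_fun (A k) w \<le> 0)) \<and>
          (\<exists>v0. (\<forall>j\<in>Jx. support_fun (shift_set (Dlg j) (zs j)) v0 < 0) \<and>
              (\<forall>i\<in>{1..m}. support_fun (A i) v0 \<le> 0 \<and> support_fun (B i) v0 \<le> 0))"
      using L1 L2 L3 by blast
  qed
qed

end
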